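(* There exist constants $C,\tilde C>0$ such that for every $\beta_0\in\{0,1/3\}$, every nonnegative $f\in L^1_{loc}(\mathbb{D})$ and every $z\in\mathbb{D}$, $$\tilde C\,P^{\beta_0}f(z)\le P_B^+f(z)\le C\sum_{\beta\in\{0,1/3\}}P^{\beta}f(z).$$
   Context: $\mathbb{D}$ is the open unit disc with normalized area measure $dA$ ($A(\mathbb{D})=1$). For $\beta\in\{0,1/3\}$, the dyadic grid $\mathcal{D}^\beta$ on $\mathbb{T}$ consists of the arcs $\{e^{i\theta}:\theta\in[2\pi(2^{-j}m+\beta),\,2\pi(2^{-j}(m+1)+\beta))\}$ for integers $j\ge0$, $0\le m<2^j$. For an arc $I$, $|I|$ is its normalized length ($|\mathbb{T}|=1$) and $Q_I=\{re^{i\theta}:1-|I|\le r<1,\ e^{i\theta}\in I\}$ is its Carleson box. The dyadic operator is $P^\beta f(z)=\sum_{I\in\mathcal{D}^\beta}\Big(\frac{1}{|I|^2}\int_{Q_I}f\,dA\Big)1_{Q_I}(z)$, and the maximal Bergman projection is $P_B^+f(z)=\int_{\mathbb{D}}\frac{f(\zeta)}{|1-\bar\zeta z|^2}dA(\zeta)$. Values in $[0,\infty]$ are allowed. *)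

theory Defs
  imports "HOL-Analysis.Analysis"
begin

definition unit_disc :: "complex set" where
  "unit_disc = {z. norm z < 1}"

definition dA_integral :: "complex set \<Rightarrow> (complex \<Rightarrow> real) \<Rightarrow> ennreal" where
  "dA_integral S f = ennreal (1 / pi) * (\<integral>\<^sup>+ \<zeta> \<in> S. ennreal (f \<zeta>) \<partial>lborel)"

definition dyadic_arc :: "real \<Rightarrow> nat \<Rightarrow> nat \<Rightarrow> complex set" where
  "dyadic_arc \<beta> j m = {cis \<theta> | \<theta>.
     2 * pi * ((1/2) ^ j * real m + \<beta>) \<le> \<theta> \<and> \<theta> < 2 * pi * ((1/2) ^ j * real (m + 1) + \<beta>)}"

definition carleson_box :: "real \<Rightarrow> nat \<Rightarrow> nat \<Rightarrow> complex set" where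
  "carleson_box \<beta> j m = {complex_of_real r * cis \<theta> | r \<theta>.
     1 - (1/2) ^ j \<le> r \<and> r < 1 \<and> cis \<theta> \<in> dyadic_arc \<beta> j m}"

definition dyadic_op :: "real \<Rightarrow> (complex \<Rightarrow> real) \<Rightarrow> complex \<Rightarrow> ennreal" where
  "dyadic_op \<beta> f z = (\<Sum>j. \<Sum>m<2 ^ j.
     ennreal (1 / ((1/2) ^ j) ^ 2) * dA_integral (carleson_box \<beta> j m) f
       * indicator (carleson_box \<beta> j m) z)"

definition bergman_max :: "(complex \<Rightarrow> real) \<Rightarrow> complex \<Rightarrow> ennreal" where
  "bergman_max f z = dA_integral unit_disc (\<lambda>\<zeta>. f \<zeta> / (norm (1 - cnj \<zeta> * z)) ^ 2)"

definition nonneg_L1loc :: "(complex \<Rightarrow> real) \<Rightarrow> bool" where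
  "nonneg_L1loc f \<longleftrightarrow> (\<forall>z\<in>unit_disc. f z \<ge> 0) \<and>
     (\<forall>K. compact K \<and> K \<subseteq> unit_disc \<longrightarrow> set_integrable lborel K f)"

end

theory Submission
  imports Defs
begin


lemma cis_int: "cis (2 * pi * of_int n) = 1"
  using cos_int_2pin[of n] sin_int_2pin[of n] by (simp add: complex_eq_iff)

lemma cis_shift_int: "cis (2 * pi * (t + of_int n)) = cis (2 * pi * t)"
proof -
  have "cis (2 * pi * (t + of_int n)) = cis (2*pi*t) * cis (2 * pi * of_int n)"
    by (simp add: cis_mult algebra_simps)
  then show ?thesis by (simp add: cis_int)
qed

lemma cis_eq_imp: assumes "cis a = cis b" shows "\<exists>n::int. a = b + 2 * pi * of_int n"
proof -
  have "exp (\<i> * of_real a) = exp (\<i> * of_real b)" using assms by (simp add: cis_conv_exp)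
  then obtain n::int where "\<i> * of_real a = \<i> * of_real b + (of_int (2 * n) * pi) * \<i>"
    by (auto simp: exp_eq)
  then have "complex_of_real a = of_real (b + 2 * pi * of_int n)"
    by (simp add: algebra_simps complex_eq_iff)
  then show ?thesis using of_real_eq_iff by blast
qed

lemma sin_ge_half: assumes "0 \<le> x" "x \<le> pi/2" shows "x / 3 \<le> sin x"
proof -
  have b: "\<bar>sin x - (\<Sum>m<3. sin_coeff m * x ^ m)\<bar> \<le> inverse (fact 3) * \<bar>x\<bar> ^ 3"
    by (rule Maclaurin_sin_bound)
  have s: "(\<Sum>m<3. sin_coeff m * x ^ m) = x"
    by (simp add: numeral_3_eq_3 sin_coeff_def)
  have f: "(fact 3 :: real) = 6" by (simp add: numeral_3_eq_3)
  have "x - x^3/6 \<le> sin x" using b assms by (simp add: s f abs_if field_simps split: if_splits)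
  moreover have "x^3/6 \<le> 2*x/3"
  proof -
    have "x^2 \<le> (pi/2)^2" using assms by (intro power_mono) auto
    also have "\<dots> \<le> 4"
    proof -
      have "pi/2 \<le> 2" using pi_less_4 by simp
      then have "(pi/2)^2 \<le> 2^2" by (intro power_mono) auto
      then show ?thesis by simp
    qed
    finally have "x^2 \<le> 4" .
    then have "x * x^2 \<le> x * 4" using assms by (intro mult_left_mono) auto
    then show ?thesis by (simp add: power3_eq_cube power2_eq_square)
  qed
  ultimately show ?thesis by linarith
qed

lemma norm_1_minus_cis: "cmod (1 - cis u) \<le> \<bar>u\<bar>"
proof -
  have "cmod (1 - cis u) = cmod (exp (\<i> * complex_of_real u) - 1)"
    by (metis cis_conv_exp norm_minus_commute)
  also have "\<dots> = 2 * \<bar>sin (u/2)\<bar>" by (rule dist_exp_i_1)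
  also have "\<dots> \<le> 2 * \<bar>u/2\<bar>" using abs_sin_x_le_abs_x[of "u/2"] by linarith
  finally show ?thesis by simp
qed

lemma norm_1_minus_rcis_sq: "(cmod (1 - of_real \<rho> * cis u))^2 = (1 - \<rho>)^2 + 4 * \<rho> * (sin (u/2))^2"
proof -
  have "(cmod (1 - of_real \<rho> * cis u))^2 = (1 - \<rho> * cos u)^2 + (\<rho> * sin u)^2"
    by (simp add: cmod_power2)
  also have "\<dots> = 1 - 2 * \<rho> * cos u + \<rho>^2 * ((sin u)^2 + (cos u)^2)"
    by algebra
  also have "(sin u)^2 + (cos u)^2 = 1" by simp
  also have "cos u = 1 - 2 * (sin (u/2))^2"
    using cos_double_sin[of "u/2"] by simp
  finally show ?thesis by (simp add: power2_eq_square algebra_simps)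
qed



lemma box_iff: "w \<in> carleson_box \<beta> j m \<longleftrightarrow> (\<exists>r t. w = of_real r * cis (2*pi*t) \<and> 1 - (1/2)^j \<le> r \<and> r < 1 \<and>
     (1/2)^j * real m + \<beta> \<le> t \<and> t < (1/2)^j * real (m+1) + \<beta>)"
proof
  assume "w \<in> carleson_box \<beta> j m"
  then obtain r \<theta> where w: "w = of_real r * cis \<theta>" "1 - (1/2)^j \<le> r" "r < 1" "cis \<theta> \<in> dyadic_arc \<beta> j m"
    unfolding carleson_box_def by auto
  then obtain \<theta>' where t: "cis \<theta> = cis \<theta>'" "2 * pi * ((1/2) ^ j * real m + \<beta>) \<le> \<theta>'"
     "\<theta>' < 2 * pi * ((1/2) ^ j * real (m + 1) + \<beta>)"
    unfolding dyadic_arc_def by auto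
  have "\<theta>' = 2*pi*(\<theta>'/(2*pi))" by simp
  moreover have "(1/2)^j * real m + \<beta> \<le> \<theta>'/(2*pi)" "\<theta>'/(2*pi) < (1/2)^j * real (m+1) + \<beta>"
    using t(2,3) pi_gt_zero by (simp_all add: field_simps del: of_nat_Suc)
  ultimately show "\<exists>r t. w = of_real r * cis (2*pi*t) \<and> 1 - (1/2)^j \<le> r \<and> r < 1 \<and>
     (1/2)^j * real m + \<beta> \<le> t \<and> t < (1/2)^j * real (m+1) + \<beta>"
    using w t(1) by metis
next
  assume "\<exists>r t. w = of_real r * cis (2*pi*t) \<and> 1 - (1/2)^j \<le> r \<and> r < 1 \<and>
     (1/2)^j * real m + \<beta> \<le> t \<and> t < (1/2)^j * real (m+1) + \<beta>"
  then obtain r t where w: "w = of_real r * cis (2*pi*t)" "1 - (1/2)^j \<le> r" "r < 1"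
     "(1/2)^j * real m + \<beta> \<le> t" "t < (1/2)^j * real (m+1) + \<beta>" by blast
  have "cis (2*pi*t) \<in> dyadic_arc \<beta> j m"
    unfolding dyadic_arc_def using w(4,5) pi_gt_zero
    by (intro CollectI exI[of _ "2*pi*t"]) (simp del: of_nat_Suc)
  then show "w \<in> carleson_box \<beta> j m" unfolding carleson_box_def using w by blast
qed

lemma box_sub_disc: "carleson_box \<beta> j m \<subseteq> unit_disc"
proof
  fix w assume "w \<in> carleson_box \<beta> j m"
  then obtain r t where w: "w = of_real r * cis (2*pi*t)" "1 - (1/2)^j \<le> r" "r < 1"
    unfolding box_iff by blast
  have "(1/2::real)^j \<le> 1" by (simp add: power_le_one)
  then have "0 \<le> r" using w by linarith
  then show "w \<in> unit_disc" using w unfolding unit_disc_def by (simp add: norm_mult)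
qed

lemma box_kernel_le:
  assumes "z \<in> carleson_box \<beta> j m" "\<zeta> \<in> carleson_box \<beta> j m"
  shows "cmod (1 - cnj \<zeta> * z) \<le> 10 * (1/2)^j"
proof -
  define h :: real where "h = (1/2)^j"
  have h1: "h \<le> 1" "0 < h" unfolding h_def by (simp_all add: power_le_one)
  obtain r t where z: "z = of_real r * cis (2*pi*t)" "1 - h \<le> r" "r < 1"
     "h * real m + \<beta> \<le> t" "t < h * real (m+1) + \<beta>"
    using assms(1) unfolding box_iff h_def by blast
  obtain s u where w: "\<zeta> = of_real s * cis (2*pi*u)" "1 - h \<le> s" "s < 1"
     "h * real m + \<beta> \<le> u" "u < h * real (m+1) + \<beta>"
    using assms(2) unfolding box_iff h_def by blast
  have r0: "0 \<le> r" "0 \<le> s" using z w h1 by linarith+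
  have "cnj \<zeta> * z = of_real (r * s) * cis (2*pi*t - 2*pi*u)"
    using w z by (simp add: cis_cnj cis_mult algebra_simps)
  then have "1 - cnj \<zeta> * z = of_real (1 - r * s) + of_real (r * s) * (1 - cis (2*pi*t - 2*pi*u))"
    by (simp add: algebra_simps)
  then have "cmod (1 - cnj \<zeta> * z) \<le> \<bar>1 - r * s\<bar> + \<bar>r * s\<bar> * cmod (1 - cis (2*pi*t - 2*pi*u))"
    by (metis norm_triangle_ineq norm_mult norm_of_real)
  also have "\<dots> \<le> 2*h + 1 * (2*pi*h)"
  proof (intro add_mono mult_mono)
    have "r * s \<le> 1" using r0 z w by (simp add: mult_le_one)
    moreover have "(1-r)*(1-s) \<ge> 0" using z w by simp
    ultimately show "\<bar>1 - r * s\<bar> \<le> 2*h" using z w by (simp add: algebra_simps)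
    show "\<bar>r * s\<bar> \<le> 1" using r0 z w by (simp add: mult_le_one)
    have "\<bar>t - u\<bar> < h" using z w by (simp add: algebra_simps)
    then have "\<bar>2*pi*t - 2*pi*u\<bar> \<le> 2*pi*h"
      using pi_gt_zero by (simp add: abs_mult right_diff_distrib[symmetric])
    then show "cmod (1 - cis (2*pi*t - 2*pi*u)) \<le> 2*pi*h"
      using norm_1_minus_cis order_trans by blast
  qed auto
  also have "\<dots> \<le> 10 * h" using pi_less_4 h1 by simp
  finally show ?thesis unfolding h_def .
qed



lemma h_le: "m < 2^j \<Longrightarrow> (1/2::real)^j * real (m+1) \<le> 1"
proof -
  assume "m < 2^j"
  then have "real (m+1) \<le> 2^j" by (metis Suc_eq_plus1 Suc_leI of_nat_le_iff of_nat_numeral of_nat_power)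
  then show ?thesis by (simp add: power_one_over field_simps)
qed

lemma box_disjoint:
  assumes "z \<in> carleson_box \<beta> j m" "z \<in> carleson_box \<beta> j m'" "m < 2^j" "m' < 2^j"
  shows "m = m'"
proof -
  define h :: real where "h = (1/2)^j"
  have h1: "0 < h" unfolding h_def by simp
  have h2: "h \<le> 1" unfolding h_def by (simp add: power_le_one)
  obtain r t where z: "z = of_real r * cis (2*pi*t)" "1 - h \<le> r" "r < 1"
     "h * real m + \<beta> \<le> t" "t < h * real (m+1) + \<beta>"
    using assms(1) unfolding box_iff h_def by blast
  obtain r' t' where z': "z = of_real r' * cis (2*pi*t')" "1 - h \<le> r'" "r' < 1"
     "h * real m' + \<beta> \<le> t'" "t' < h * real (m'+1) + \<beta>"
    using assms(2) unfolding box_iff h_def by blast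
  have hm: "h * real (m+1) \<le> 1" "h * real (m'+1) \<le> 1" using h_le assms(3,4) unfolding h_def by auto
  show ?thesis
  proof (cases "z = 0")
    case True
    then have "r = 0" using z by simp
    then have "1 \<le> h" using z by simp
    then have "j = 0" unfolding h_def
      by (metis less_le_not_le one_le_power power_0 power_strict_decreasing_iff zero_less_divide_1_iff zero_less_numeral not_gr_zero divide_less_eq_1_pos one_less_numeral_iff semiring_norm(76))
    then show ?thesis using assms by simp
  next
    case False
    have "norm z = \<bar>r\<bar>" using z(1) by (simp add: norm_mult)
    moreover have "norm z = \<bar>r'\<bar>" using z'(1) by (simp add: norm_mult)
    moreover have "0 \<le> r" "0 \<le> r'" using z z' h2 by linarith+
    ultimately have rr: "r = r'" "r \<noteq> 0" using z(1) False by auto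
    then have "cis (2*pi*t) = cis (2*pi*t')" using z z' by simp
    then obtain n::int where "2*pi*t = 2*pi*t' + 2*pi* of_int n" using cis_eq_imp by blast
    then have tn: "t = t' + of_int n" using pi_gt_zero
      by (metis (no_types, opaque_lifting) distrib_left mult_cancel_left pi_neq_zero zero_neq_numeral mult_eq_0_iff)
    have "t < \<beta> + 1" "\<beta> \<le> t" "t' < \<beta> + 1" "\<beta> \<le> t'" using z z' hm h1 by (auto intro: order_trans[rotated])
    then have "n = 0" using tn by linarith
    then have "t = t'" using tn by simp
    show ?thesis
    proof (rule ccontr)
      assume "m \<noteq> m'"
      then consider "m + 1 \<le> m'" | "m' + 1 \<le> m" by linarith
      then show False
      proof cases
        case 1 then have "h * real (m+1) \<le> h * real m'" using h1 by simp
        then show False using z z' \<open>t = t'\<close> by linarith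
      next
        case 2 then have "h * real (m'+1) \<le> h * real m" using h1 by simp
        then show False using z z' \<open>t = t'\<close> by linarith
      qed
    qed
  qed
qed



lemma box_borel: "carleson_box \<beta> j m \<in> sets borel"
proof -
  define h :: real where "h = (1/2)^j"
  define a where "a = h * real m + \<beta>"
  define b where "b = h * real (m+1) + \<beta>"
  define g :: "real \<times> real \<Rightarrow> complex" where "g = (\<lambda>p. of_real (fst p) * cis (2*pi * snd p))"
  define K where "K = (\<lambda>n::nat. {1-h..1 - inverse (real (Suc n))} \<times> {a..b - inverse (real (Suc n))})"
  have eq: "carleson_box \<beta> j m = (\<Union>n. g ` K n)"
  proof
    show "carleson_box \<beta> j m \<subseteq> (\<Union>n. g ` K n)"
    proof
      fix w assume "w \<in> carleson_box \<beta> j m"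
      then obtain r t where w: "w = of_real r * cis (2 * pi * t)" "1 - h \<le> r" "r < 1"
        "a \<le> t" "t < b" unfolding box_iff h_def a_def b_def by blast
      obtain n1 where n1: "inverse (real (Suc n1)) < 1 - r" using reals_Archimedean[of "1 - r"] w(3) by auto
      obtain n2 where n2: "inverse (real (Suc n2)) < b - t" using reals_Archimedean[of "b - t"] w(5) by auto
      define n where "n = max n1 n2"
      have "inverse (real (Suc n)) \<le> inverse (real (Suc n1))" "inverse (real (Suc n)) \<le> inverse (real (Suc n2))"
        unfolding n_def by (auto intro!: le_imp_inverse_le)
      then have "r \<le> 1 - inverse (real (Suc n))" "t \<le> b - inverse (real (Suc n))" using n1 n2 by linarith+
      then have "(r, t) \<in> K n" using w unfolding K_def by (simp del: of_nat_Suc)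
      moreover have "w = g (r, t)" using w unfolding g_def by simp
      ultimately show "w \<in> (\<Union>n. g ` K n)" by blast
    qed
    show "(\<Union>n. g ` K n) \<subseteq> carleson_box \<beta> j m"
    proof
      fix w assume "w \<in> (\<Union>n. g ` K n)"
      then obtain n r t where "(r,t) \<in> K n" "w = g (r,t)" by auto
      moreover have "0 < inverse (real (Suc n))" by simp
      ultimately have "w = of_real r * cis (2 * pi * t)" "1 - h \<le> r" "r \<le> 1 - inverse (real (Suc n))" "a \<le> t" "t \<le> b - inverse (real (Suc n))"
        unfolding K_def g_def by auto
      moreover have "r < 1" "t < b" using calculation \<open>0 < inverse (real (Suc n))\<close> by linarith+
      ultimately have "w = of_real r * cis (2 * pi * t)" "1 - h \<le> r" "r < 1" "a \<le> t" "t < b" by auto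
      then show "w \<in> carleson_box \<beta> j m" unfolding box_iff h_def[symmetric] a_def[symmetric] b_def[symmetric]
        by blast
    qed
  qed
  have "continuous_on UNIV g" unfolding g_def by (intro continuous_intros)
  then have "compact (g ` K n)" for n unfolding K_def
    by (intro compact_continuous_image compact_Times) (auto intro: continuous_on_subset)
  then have "g ` K n \<in> sets borel" for n by (simp add: borel_closed compact_imp_closed)
  then show ?thesis unfolding eq by (intro sets.countable_UN) auto
qed



lemma two_pow_mod3: "(2::int)^j mod 3 \<noteq> 0"
proof (induction j)
  case 0 then show ?case by simp
next
  case (Suc j)
  have "(2::int)^(Suc j) mod 3 = (2 * ((2::int)^j mod 3)) mod 3" by (simp add: mod_mult_right_eq)
  moreover have "0 \<le> (2::int)^j mod 3" "(2::int)^j mod 3 < 3" by simp_all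
  ultimately have "(2::int)^j mod 3 = 1 \<or> (2::int)^j mod 3 = 2" using Suc by linarith
  then show ?case using \<open>(2::int)^(Suc j) mod 3 = (2 * ((2::int)^j mod 3)) mod 3\<close> by auto
qed

lemma one_third:
  fixes lo hi :: real
  assumes "lo \<le> hi" "hi - lo < (1/2)^j / 3"
  shows "\<exists>\<beta>\<in>{0, 1/3}. \<exists>k::int. (1/2)^j * of_int k + \<beta> \<le> lo \<and> hi < (1/2)^j * (of_int k + 1) + \<beta>"
proof (rule ccontr)
  define h :: real where "h = (1/2)^j"
  have h0: "0 < h" unfolding h_def by simp
  assume na: "\<not> ?thesis"
  define k0 where "k0 = \<lfloor>lo / h\<rfloor>"
  define k1 where "k1 = \<lfloor>(lo - 1/3) / h\<rfloor>"
  have a0: "h * of_int k0 \<le> lo" "lo < h * (of_int k0 + 1)"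
    unfolding k0_def using floor_divide_lower[OF h0, of lo] floor_divide_upper[OF h0, of lo] by (simp_all add: algebra_simps)
  have a1: "h * of_int k1 + 1/3 \<le> lo" "lo < h * (of_int k1 + 1) + 1/3"
    unfolding k1_def using floor_divide_lower[OF h0, of "lo - 1/3"] floor_divide_upper[OF h0, of "lo - 1/3"] by (simp_all add: algebra_simps)
  have b0: "h * (of_int k0 + 1) \<le> hi" using na a0 unfolding h_def by force
  have b1: "h * (of_int k1 + 1) + 1/3 \<le> hi" using na a1 unfolding h_def by force
  have "\<bar>h * (of_int k0 + 1) - (h * (of_int k1 + 1) + 1/3)\<bar> < h / 3"
    using a0 a1 b0 b1 assms unfolding h_def[symmetric] by linarith
  then have "\<bar>h * of_int (k0 - k1) - 1/3\<bar> < h / 3" by (simp add: algebra_simps)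
  then have "\<bar>(h * of_int (k0 - k1) - 1/3) * (3 * 2^j)\<bar> < h / 3 * (3 * 2^j)"
    by (simp add: abs_mult)
  moreover have hh: "h * 2^j = 1" unfolding h_def by (simp add: power_one_over)
  moreover have "(h * of_int (k0 - k1) - 1/3) * (3 * 2^j) = 3 * of_int (k0 - k1) * (h * 2^j) - (2::real)^j"
    by (simp add: algebra_simps)
  moreover have "h / 3 * (3 * 2^j) = h * 2^j" by simp
  ultimately have "\<bar>3 * of_int (k0 - k1) - (2::real)^j\<bar> < 1"
    by simp
  then have "\<bar>of_int (3 * (k0 - k1) - 2^j)\<bar> < (1::real)" by simp
  then have "\<bar>3 * (k0 - k1) - 2^j\<bar> < 1" by linarith
  then have "(2::int)^j = 3 * (k0 - k1)" by linarith
  then have "(2::int)^j mod 3 = 0" by simp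
  then show False using two_pow_mod3[of j] by simp
qed

lemma cell_box:
  fixes k :: int
  assumes "(1/2)^j * of_int k + \<beta> \<le> t" "t < (1/2)^j * (of_int k + 1) + \<beta>" "1 - (1/2)^j \<le> r" "r < 1"
  shows "of_real r * cis (2 * pi * t) \<in> carleson_box \<beta> j (nat (k mod 2^j))"
    "nat (k mod 2^j) < 2^j"
proof -
  define h :: real where "h = (1/2)^j"
  define m where "m = k mod 2^j"
  define q where "q = k div 2^j"
  have km: "k = 2^j * q + m" unfolding m_def q_def by simp
  have m0: "0 \<le> m" "m < 2^j" unfolding m_def by simp_all
  have hh: "h * 2^j = 1" unfolding h_def by (simp add: power_one_over)
  have "h * of_int k = of_int q + h * of_int m"
    unfolding km by (simp add: algebra_simps hh flip: mult.assoc)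
  then have "h * real (nat m) + \<beta> \<le> t - of_int q" "t - of_int q < h * real (nat m + 1) + \<beta>"
    using assms m0 unfolding h_def[symmetric] by (simp_all add: algebra_simps)
  moreover have "cis (2 * pi * t) = cis (2 * pi * (t - of_int q))"
    using cis_shift_int[of "t - of_int q" q] by simp
  ultimately show "of_real r * cis (2 * pi * t) \<in> carleson_box \<beta> j (nat (k mod 2^j))"
    unfolding box_iff h_def[symmetric] m_def[symmetric] using assms(3,4)
    by (intro exI[of _ r] exI[of _ "t - of_int q"]) (simp add: h_def)
  show "nat (k mod 2^j) < 2^j" using m0 unfolding m_def
    by (metis nat_less_iff of_nat_numeral of_nat_power)
qed



lemma sin_sq_bound:
  fixes v :: real assumes "0 \<le> v" "v < 1"
  shows "(if v \<le> 1/2 then v else 1 - v)^2 \<le> (sin (pi * v))^2"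
proof -
  have key: "w \<le> sin (pi * w)" if "0 \<le> w" "w \<le> 1/2" for w :: real
  proof -
    have "pi * w / 3 \<le> sin (pi * w)" using that pi_gt_zero by (intro sin_ge_half) auto
    moreover have "3 * w \<le> pi * w" using that pi_gt3 by (intro mult_right_mono) auto
    then have "w \<le> pi * w / 3" by simp
    ultimately show ?thesis by linarith
  qed
  show ?thesis
  proof (cases "v \<le> 1/2")
    case True
    then show ?thesis using key[of v] assms by (simp add: power_mono)
  next
    case False
    have "sin (pi * v) = sin (pi * (1 - v))" using sin_pi_minus[of "pi * v"] by (simp add: algebra_simps)
    then show ?thesis using key[of "1 - v"] assms False by (simp add: power_mono)
  qed
qed

lemma dist_bounds:
  assumes "z \<in> unit_disc" "\<zeta> \<in> unit_disc"
  defines "x \<equiv> Arg z / (2 * pi)" and "y \<equiv> Arg \<zeta> / (2 * pi)"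
  defines "v \<equiv> \<bar>x - y\<bar>"
  defines "D \<equiv> cmod (1 - cnj \<zeta> * z)"
  shows "(if v \<le> 1/2 then v else 1 - v) \<le> D" "1 - cmod z \<le> D" "1 - cmod \<zeta> \<le> D"
    "z = of_real (cmod z) * cis (2 * pi * x)" "\<zeta> = of_real (cmod \<zeta>) * cis (2 * pi * y)"
    "-1/2 < x" "x \<le> 1/2" "-1/2 < y" "y \<le> 1/2"
proof -
  have nz: "cmod z < 1" "cmod \<zeta> < 1" using assms(1,2) unfolding unit_disc_def by auto
  show zx: "z = of_real (cmod z) * cis (2 * pi * x)" unfolding x_def
    using rcis_cmod_Arg[of z] by (simp add: rcis_def)
  show zy: "\<zeta> = of_real (cmod \<zeta>) * cis (2 * pi * y)" unfolding y_def
    using rcis_cmod_Arg[of \<zeta>] by (simp add: rcis_def)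
  show xb: "-1/2 < x" "x \<le> 1/2" unfolding x_def using Arg_bounded[of z] pi_gt_zero
    by (simp_all add: field_simps)
  show yb: "-1/2 < y" "y \<le> 1/2" unfolding y_def using Arg_bounded[of \<zeta>] pi_gt_zero
    by (simp_all add: field_simps)
  define \<rho> where "\<rho> = cmod z * cmod \<zeta>"
  have \<rho>0: "0 \<le> \<rho>" "\<rho> \<le> cmod z" "\<rho> \<le> cmod \<zeta>" unfolding \<rho>_def using nz
    by (auto simp: mult_left_le mult_left_le_one_le)
  have "cnj \<zeta> * z = of_real \<rho> * cis (2 * pi * x - 2 * pi * y)"
    apply (subst zx, subst zy) unfolding \<rho>_def by (simp add: cis_cnj cis_mult algebra_simps)
  moreover have "(2 * pi * x - 2 * pi * y) / 2 = pi * (x - y)" by (simp add: field_simps)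
  ultimately have D2: "D^2 = (1 - \<rho>)^2 + 4 * \<rho> * (sin (pi * (x - y)))^2"
    unfolding D_def using norm_1_minus_rcis_sq[of \<rho> "2 * pi * x - 2 * pi * y"] by simp
  have "(sin (pi * (x - y)))^2 = (sin (pi * v))^2"
  proof (cases "0 \<le> x - y")
    case False
    have "pi * (x - y) = - (pi * (y - x))" by (simp add: algebra_simps)
    then have "sin (pi * (x - y)) = - sin (pi * (y - x))" by (simp only: sin_minus)
    then show ?thesis using False by (simp add: abs_if v_def)
  qed (simp add: abs_if v_def)
  moreover have "v < 1" "0 \<le> v" using xb yb unfolding v_def by auto
  ultimately have S: "(if v \<le> 1/2 then v else 1 - v)^2 \<le> (sin (pi * (x - y)))^2"
    using sin_sq_bound by simp
  have D0: "0 \<le> D" unfolding D_def by simp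
  have 1: "1 - \<rho> \<le> D"
  proof (rule power2_le_imp_le)
    show "(1 - \<rho>)^2 \<le> D^2" unfolding D2 using \<rho>0 by simp
  qed (rule D0)
  then show "1 - cmod z \<le> D" "1 - cmod \<zeta> \<le> D" using \<rho>0 by linarith+
  show "(if v \<le> 1/2 then v else 1 - v) \<le> D"
  proof (cases "1/4 \<le> \<rho>")
    case True
    have "(if v \<le> 1/2 then v else 1 - v)^2 \<le> 4 * \<rho> * (sin (pi * (x - y)))^2"
    proof -
      have "(sin (pi * (x - y)))^2 \<le> 4 * \<rho> * (sin (pi * (x - y)))^2"
        using True by (simp add: mult_le_cancel_right1 zero_le_power2)
      then show ?thesis using S by linarith
    qed
    also have "\<dots> \<le> D^2" unfolding D2 by simp
    finally show ?thesis using D0 by (rule power2_le_imp_le)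
  next
    case False
    then show ?thesis using 1 \<open>v < 1\<close> by auto
  qed
qed



lemma lohi:
  fixes x y :: real
  assumes "-1/2 < x" "x \<le> 1/2" "-1/2 < y" "y \<le> 1/2"
  shows "\<exists>lo hi tx ty. lo \<le> hi \<and> hi - lo = (if \<bar>x - y\<bar> \<le> 1/2 then \<bar>x - y\<bar> else 1 - \<bar>x - y\<bar>) \<and>
    lo \<le> tx \<and> tx \<le> hi \<and> lo \<le> ty \<and> ty \<le> hi \<and> cis (2 * pi * tx) = cis (2 * pi * x) \<and> cis (2 * pi * ty) = cis (2 * pi * y)"
proof -
  have c1: "cis (2 * pi * (t + 1)) = cis (2 * pi * t)" for t
    using cis_shift_int[of t 1] by simp
  consider "\<bar>x - y\<bar> \<le> 1/2" | "\<not> \<bar>x - y\<bar> \<le> 1/2" "x \<le> y" | "\<not> \<bar>x - y\<bar> \<le> 1/2" "y < x" by linarith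
  then show ?thesis
  proof cases
    case 1 show ?thesis
      apply (rule exI[of _ "min x y"], rule exI[of _ "max x y"], rule exI[of _ x], rule exI[of _ y]) using 1 by auto
  next
    case 2 show ?thesis
      apply (rule exI[of _ y], rule exI[of _ "x + 1"], rule exI[of _ "x + 1"], rule exI[of _ y]) using 2 c1[of x] assms by auto
  next
    case 3 show ?thesis
      apply (rule exI[of _ x], rule exI[of _ "y + 1"], rule exI[of _ x], rule exI[of _ "y + 1"]) using 3 c1[of y] assms by auto
  qed
qed

lemma in_some_box:
  assumes "lo \<le> t" "t \<le> hi" "(1/2)^j * of_int k + \<beta> \<le> lo" "hi < (1/2)^j * (of_int k + 1) + \<beta>"
    "1 - (1/2)^j \<le> r" "r < 1"
  shows "of_real r * cis (2 * pi * t) \<in> carleson_box \<beta> j (nat (k mod 2^j))"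
  using cell_box(1)[of j k \<beta> t r] assms by linarith

lemma cover:
  assumes "z \<in> unit_disc" "\<zeta> \<in> unit_disc"
  shows "\<exists>\<beta>\<in>{0, 1/3}. \<exists>j m. m < 2^j \<and> z \<in> carleson_box \<beta> j m \<and> \<zeta> \<in> carleson_box \<beta> j m \<and>
           (1/2)^j \<le> 6 * cmod (1 - cnj \<zeta> * z)"
proof -
  define x where "x = Arg z / (2 * pi)"
  define y where "y = Arg \<zeta> / (2 * pi)"
  define D where "D = cmod (1 - cnj \<zeta> * z)"
  define \<delta> where "\<delta> = (if \<bar>x - y\<bar> \<le> 1/2 then \<bar>x - y\<bar> else 1 - \<bar>x - y\<bar>)"
  note db = dist_bounds[OF assms, folded x_def y_def D_def, folded \<delta>_def]
  obtain lo hi tx ty where lh: "lo \<le> hi" "hi - lo = \<delta>" "lo \<le> tx" "tx \<le> hi" "lo \<le> ty" "ty \<le> hi"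
    "cis (2 * pi * tx) = cis (2 * pi * x)" "cis (2 * pi * ty) = cis (2 * pi * y)"
    using lohi[OF db(6-9)] unfolding \<delta>_def by blast
  have zt: "z = of_real (cmod z) * cis (2 * pi * tx)" using db(4) lh(7) by simp
  have \<zeta>t: "\<zeta> = of_real (cmod \<zeta>) * cis (2 * pi * ty)" using db(5) lh(8) by simp
  have nz: "cmod z < 1" "cmod \<zeta> < 1" using assms unfolding unit_disc_def by auto
  define M where "M = max \<delta> (max (1 - cmod z) (1 - cmod \<zeta>))"
  have MD: "M \<le> D" unfolding M_def using db(1-3) by simp
  have M0: "0 < M" unfolding M_def using nz by simp
  have in0: "w \<in> carleson_box 0 0 0" if "w = of_real r * cis (2 * pi * t)" "0 \<le> r" "r < 1" for w r t
  proof -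
    have "of_real r * cis (2 * pi * t) \<in> carleson_box 0 0 (nat (\<lfloor>t\<rfloor> mod 2^0))"
      using that by (intro in_some_box[of t t t]) auto
    then show ?thesis using that by simp
  qed
  show ?thesis
  proof (cases "1 \<le> 3 * M")
    case True
    have "z \<in> carleson_box 0 0 0" "\<zeta> \<in> carleson_box 0 0 0"
      using in0[OF zt] in0[OF \<zeta>t] nz by auto
    moreover have "(1/2::real)^0 \<le> 6 * D" using True MD by simp
    ultimately show ?thesis unfolding D_def by (intro bexI[of _ 0] exI[of _ 0] exI[of _ 0]) auto
  next
    case False
    obtain n where n: "(1/2::real)^n < 3 * M" using real_arch_pow_inv[of "3 * M" "1/2"] M0 by auto
    define P where "P = (\<lambda>n. (1/2::real)^n \<le> 3 * M)"
    have Pn: "P n" using n unfolding P_def by simp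
    define n0 where "n0 = (LEAST n. P n)"
    have "P n0" unfolding n0_def using Pn by (rule LeastI)
    have "\<not> P 0" unfolding P_def using False by simp
    then have "n0 \<noteq> 0" using \<open>P n0\<close> by metis
    define j where "j = n0 - 1"
    have "\<not> P j" unfolding j_def n0_def by (rule not_less_Least) (use \<open>n0 \<noteq> 0\<close> n0_def in \<open>metis gr0I diff_less zero_less_one\<close>)
    have "Suc j = n0" unfolding j_def using \<open>n0 \<noteq> 0\<close> by simp
    then have "P (Suc j)" using \<open>P n0\<close> by simp
    define h :: real where "h = (1/2)^j"
    have h1: "3 * M < h" "h \<le> 6 * M" using \<open>\<not> P j\<close> \<open>P (Suc j)\<close> unfolding P_def h_def by auto
    have Mb: "\<delta> \<le> M" "1 - cmod z \<le> M" "1 - cmod \<zeta> \<le> M" unfolding M_def by auto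
    have "hi - lo < (1/2)^j / 3" using lh(2) h1 Mb unfolding h_def by linarith
    then obtain \<beta> k where \<beta>: "\<beta> \<in> {0, 1/3}" "(1/2)^j * of_int k + \<beta> \<le> lo" "hi < (1/2)^j * (of_int k + 1) + \<beta>"
      using one_third[OF lh(1)] by blast
    have r: "1 - (1/2)^j \<le> cmod z" "1 - (1/2)^j \<le> cmod \<zeta>" using h1 Mb M0 unfolding h_def by linarith+
    have "z \<in> carleson_box \<beta> j (nat (k mod 2^j))"
      using in_some_box[OF lh(3,4) \<beta>(2,3) r(1) nz(1)] zt by simp
    moreover have "\<zeta> \<in> carleson_box \<beta> j (nat (k mod 2^j))"
      using in_some_box[OF lh(5,6) \<beta>(2,3) r(2) nz(2)] \<zeta>t by simp
    moreover have "nat (k mod 2^j) < 2^j" by (simp add: nat_less_iff)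
    moreover have "(1/2::real)^j \<le> 6 * D" using h1 MD unfolding h_def by linarith
    ultimately show ?thesis using \<beta>(1) unfolding D_def by blast
  qed
qed



lemma box_meas[measurable]: "carleson_box \<beta> j m \<in> sets lborel"
  using box_borel by simp

lemma G_meas:
  assumes "nonneg_L1loc f"
  shows "(\<lambda>\<zeta>. ennreal (f \<zeta>) * indicator unit_disc \<zeta>) \<in> borel_measurable lborel"
proof -
  define K where "K = (\<lambda>n::nat. cball (0::complex) (1 - inverse (real (Suc n))))"
  have Kd: "K n \<subseteq> unit_disc" for n
  proof
    fix x assume "x \<in> K n"
    then have "cmod x \<le> 1 - inverse (real (Suc n))" unfolding K_def by simp
    moreover have "0 < inverse (real (Suc n))" by simp
    ultimately have "cmod x < 1" by linarith
    then show "x \<in> unit_disc" unfolding unit_disc_def by simp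
  qed
  have Kc: "compact (K n)" for n unfolding K_def by simp
  have f0: "\<And>z. z \<in> unit_disc \<Longrightarrow> 0 \<le> f z" using assms unfolding nonneg_L1loc_def by auto
  have gm: "(\<lambda>\<zeta>. ennreal (indicator (K n) \<zeta> *\<^sub>R f \<zeta>)) \<in> borel_measurable lborel" for n
  proof -
    have "set_integrable lborel (K n) f" using assms Kd Kc unfolding nonneg_L1loc_def by blast
    then have "(\<lambda>\<zeta>. indicator (K n) \<zeta> *\<^sub>R f \<zeta>) \<in> borel_measurable lborel"
      unfolding set_integrable_def by (rule borel_measurable_integrable)
    then show ?thesis by measurable
  qed
  have eq: "ennreal (f \<zeta>) * indicator unit_disc \<zeta> = (SUP n. ennreal (indicator (K n) \<zeta> *\<^sub>R f \<zeta>))" for \<zeta>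
  proof (cases "\<zeta> \<in> unit_disc")
    case True
    then have "cmod \<zeta> < 1" unfolding unit_disc_def by simp
    then obtain n where n: "inverse (real (Suc n)) < 1 - cmod \<zeta>" using reals_Archimedean[of "1 - cmod \<zeta>"] by auto
    then have "\<zeta> \<in> K n" unfolding K_def by simp
    have "(SUP n. ennreal (indicator (K n) \<zeta> *\<^sub>R f \<zeta>)) = ennreal (f \<zeta>)"
    proof (rule antisym)
      show "(SUP n. ennreal (indicator (K n) \<zeta> *\<^sub>R f \<zeta>)) \<le> ennreal (f \<zeta>)"
        by (rule SUP_least) (simp add: indicator_def f0[OF True])
      have "ennreal (f \<zeta>) = ennreal (indicator (K n) \<zeta> *\<^sub>R f \<zeta>)" using \<open>\<zeta> \<in> K n\<close> by simp
      also have "\<dots> \<le> (SUP n. ennreal (indicator (K n) \<zeta> *\<^sub>R f \<zeta>))" by (rule SUP_upper) simp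
      finally show "ennreal (f \<zeta>) \<le> (SUP n. ennreal (indicator (K n) \<zeta> *\<^sub>R f \<zeta>))" .
    qed
    then show ?thesis using True by simp
  next
    case False
    then have "\<zeta> \<notin> K n" for n using Kd by blast
    then show ?thesis using False by simp
  qed
  show ?thesis unfolding eq using gm by measurable
qed

definition Kb :: "real \<Rightarrow> complex \<Rightarrow> complex \<Rightarrow> ennreal" where
  "Kb \<beta> z \<zeta> = (\<Sum>j. \<Sum>m<2 ^ j. ennreal (1 / ((1/2) ^ j) ^ 2) * indicator (carleson_box \<beta> j m) \<zeta>
      * indicator (carleson_box \<beta> j m) z)"

lemma Kb_meas[measurable]: "(\<lambda>\<zeta>. Kb \<beta> z \<zeta>) \<in> borel_measurable lborel"
  unfolding Kb_def by measurable

lemma dyadic_repr: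
  assumes G: "(\<lambda>\<zeta>. ennreal (f \<zeta>) * indicator unit_disc \<zeta>) \<in> borel_measurable lborel"
  shows "dyadic_op \<beta> f z = ennreal (1/pi) * (\<integral>\<^sup>+\<zeta>. ennreal (f \<zeta>) * indicator unit_disc \<zeta> * Kb \<beta> z \<zeta> \<partial>lborel)"
proof -
  define G where "G = (\<lambda>\<zeta>. ennreal (f \<zeta>) * indicator unit_disc \<zeta>)"
  have Gm[measurable]: "G \<in> borel_measurable lborel" using G unfolding G_def .
  define T where "T = (\<lambda>j m \<zeta>. ennreal (1 / ((1/2::real) ^ j) ^ 2) * indicator (carleson_box \<beta> j m) \<zeta>
      * indicator (carleson_box \<beta> j m) z)"
  have tm: "ennreal (1 / ((1/2) ^ j) ^ 2) * dA_integral (carleson_box \<beta> j m) f * indicator (carleson_box \<beta> j m) z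
     = ennreal (1/pi) * (\<integral>\<^sup>+\<zeta>. G \<zeta> * T j m \<zeta> \<partial>lborel)" for j m
  proof -
    have "G \<zeta> * T j m \<zeta> = (ennreal (1 / ((1/2::real) ^ j) ^ 2) * indicator (carleson_box \<beta> j m) z)
          * (ennreal (f \<zeta>) * indicator (carleson_box \<beta> j m) \<zeta>)" for \<zeta>
      using box_sub_disc[of \<beta> j m] unfolding G_def T_def by (auto simp: indicator_def mult.commute)
    then have "(\<integral>\<^sup>+\<zeta>. G \<zeta> * T j m \<zeta> \<partial>lborel) = (ennreal (1 / ((1/2::real) ^ j) ^ 2) * indicator (carleson_box \<beta> j m) z)
          * (\<integral>\<^sup>+\<zeta>. ennreal (f \<zeta>) * indicator (carleson_box \<beta> j m) \<zeta> \<partial>lborel)"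
    proof -
      assume e: "\<And>\<zeta>. G \<zeta> * T j m \<zeta> = (ennreal (1 / ((1/2::real) ^ j) ^ 2) * indicator (carleson_box \<beta> j m) z)
          * (ennreal (f \<zeta>) * indicator (carleson_box \<beta> j m) \<zeta>)"
      have "(\<lambda>\<zeta>. ennreal (f \<zeta>) * indicator (carleson_box \<beta> j m) \<zeta>) = (\<lambda>\<zeta>. G \<zeta> * indicator (carleson_box \<beta> j m) \<zeta>)"
        using box_sub_disc[of \<beta> j m] unfolding G_def by (auto simp: indicator_def fun_eq_iff)
      then have m: "(\<lambda>\<zeta>. ennreal (f \<zeta>) * indicator (carleson_box \<beta> j m) \<zeta>) \<in> borel_measurable lborel"
        by simp
      show ?thesis unfolding e by (rule nn_integral_cmult[OF m])
    qed
    then show ?thesis unfolding dA_integral_def by (simp add: ac_simps)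
  qed
  have Tm[measurable]: "(\<lambda>\<zeta>. G \<zeta> * T j m \<zeta>) \<in> borel_measurable lborel" for j m
    unfolding T_def by measurable
  have "dyadic_op \<beta> f z = (\<Sum>j. \<Sum>m<2 ^ j. ennreal (1/pi) * (\<integral>\<^sup>+\<zeta>. G \<zeta> * T j m \<zeta> \<partial>lborel))"
    unfolding dyadic_op_def tm ..
  also have "\<dots> = ennreal (1/pi) * (\<Sum>j. \<Sum>m<2 ^ j. (\<integral>\<^sup>+\<zeta>. G \<zeta> * T j m \<zeta> \<partial>lborel))"
    by (simp only: sum_distrib_left[symmetric] ennreal_suminf_cmult)
  also have "(\<Sum>j. \<Sum>m<2 ^ j. (\<integral>\<^sup>+\<zeta>. G \<zeta> * T j m \<zeta> \<partial>lborel)) = (\<Sum>j. (\<integral>\<^sup>+\<zeta>. (\<Sum>m<2 ^ j. G \<zeta> * T j m \<zeta>) \<partial>lborel))"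
    by (subst nn_integral_sum) auto
  also have "\<dots> = (\<integral>\<^sup>+\<zeta>. (\<Sum>j. \<Sum>m<2 ^ j. G \<zeta> * T j m \<zeta>) \<partial>lborel)"
    by (rule nn_integral_suminf[symmetric]) measurable
  also have "\<dots> = (\<integral>\<^sup>+\<zeta>. G \<zeta> * Kb \<beta> z \<zeta> \<partial>lborel)"
    unfolding Kb_def T_def by (simp only: sum_distrib_left[symmetric] ennreal_suminf_cmult mult.assoc)
  finally show ?thesis unfolding G_def .
qed



lemma cj_eq: "1 / ((1/2::real) ^ j) ^ 2 = 4 ^ j"
proof -
  have "((1/2::real)^j)^2 = ((1/2)^2)^j" by (simp only: power_mult[symmetric] mult.commute)
  then show ?thesis by (simp add: power_one_over)
qed

lemma term_le_Kb:
  assumes "m < 2^j"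
  shows "ennreal (1 / ((1/2) ^ j) ^ 2) * indicator (carleson_box \<beta> j m) \<zeta> * indicator (carleson_box \<beta> j m) z \<le> Kb \<beta> z \<zeta>"
proof -
  let ?T = "\<lambda>j m. ennreal (1 / ((1/2::real) ^ j) ^ 2) * indicator (carleson_box \<beta> j m) \<zeta> * indicator (carleson_box \<beta> j m) z"
  have "?T j m \<le> (\<Sum>m<2^j. ?T j m)"
    using assms by (intro member_le_sum) auto
  also have "\<dots> = (\<Sum>j\<in>{j}. \<Sum>m<2^j. ?T j m)" by simp
  also have "\<dots> \<le> (\<Sum>j. \<Sum>m<2^j. ?T j m)"
    by (rule sum_le_suminf) auto
  finally show ?thesis unfolding Kb_def .
qed

lemma KU:
  assumes "z \<in> unit_disc" "\<zeta> \<in> unit_disc"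
  shows "ennreal (1 / (cmod (1 - cnj \<zeta> * z))^2) \<le> ennreal 36 * (Kb 0 z \<zeta> + Kb (1/3) z \<zeta>)"
proof -
  define D where "D = cmod (1 - cnj \<zeta> * z)"
  obtain \<beta> j m where b: "\<beta> \<in> {0, 1/3}" "m < 2^j" "z \<in> carleson_box \<beta> j m" "\<zeta> \<in> carleson_box \<beta> j m"
     "(1/2)^j \<le> 6 * D"
    using cover[OF assms] unfolding D_def by blast
  define h :: real where "h = (1/2)^j"
  have h0: "0 < h" unfolding h_def by simp
  have "h^2 \<le> (6 * D)^2" using b(5) h0 unfolding h_def by (intro power_mono) auto
  then have "h^2 \<le> 36 * D^2" by (simp add: power_mult_distrib)
  moreover have "0 < D" using b(5) h0 unfolding h_def by linarith
  ultimately have "1 / D^2 \<le> 36 * (1 / h^2)" using h0 by (simp add: field_simps)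
  then have "ennreal (1 / D^2) \<le> ennreal (36 * (1 / h^2))" by (rule ennreal_leI)
  also have "\<dots> = ennreal 36 * ennreal (1 / h^2)" by (rule ennreal_mult) auto
  also have "ennreal (1 / h^2) \<le> Kb \<beta> z \<zeta>"
    using term_le_Kb[OF b(2), of \<beta> \<zeta> z] b(3,4) unfolding h_def by simp
  also have "Kb \<beta> z \<zeta> \<le> Kb 0 z \<zeta> + Kb (1/3) z \<zeta>" 
  proof -
    have "Kb 0 z \<zeta> \<le> Kb 0 z \<zeta> + Kb (1/3) z \<zeta>" "Kb (1/3) z \<zeta> \<le> Kb 0 z \<zeta> + Kb (1/3) z \<zeta>" by simp_all
    then show ?thesis using b(1) by (metis insert_iff singletonD)
  qed
  finally show ?thesis unfolding D_def by (simp add: mult_left_mono)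
qed



lemma KL:
  assumes "z \<in> unit_disc" "\<zeta> \<in> unit_disc"
  shows "ennreal (1/150) * Kb \<beta> z \<zeta> \<le> ennreal (1 / (cmod (1 - cnj \<zeta> * z))^2)"
proof -
  define D where "D = cmod (1 - cnj \<zeta> * z)"
  have nz: "cmod z < 1" "cmod \<zeta> < 1" using assms unfolding unit_disc_def by auto
  have "cmod (cnj \<zeta> * z) < 1" using nz by (simp add: norm_mult mult_strict_mono' mult_le_one)
     (metis mult_strict_mono' mult_1 norm_ge_zero)
  then have D0: "0 < D" unfolding D_def by (metis norm_one norm_triangle_ineq2 diff_gt_0_iff_gt order_le_less_trans zero_less_norm_iff right_minus_eq less_irrefl)
  have "D \<le> 1 + cmod (cnj \<zeta> * z)" unfolding D_def by (metis norm_one norm_triangle_ineq4)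
  then have D2: "D \<le> 2" using \<open>cmod (cnj \<zeta> * z) < 1\<close> by linarith
  define P where "P = (\<lambda>n. 10 * (1/2::real)^n < D)"
  obtain n where n: "(1/2::real)^n < D / 10" using real_arch_pow_inv[of "D/10" "1/2"] D0 by auto
  have Pn: "P n" using n unfolding P_def by simp
  define n0 where "n0 = (LEAST n. P n)"
  have "P n0" unfolding n0_def using Pn by (rule LeastI)
  have "\<not> P 0" unfolding P_def using D2 by simp
  then have "n0 \<noteq> 0" using \<open>P n0\<close> by metis
  define L where "L = n0 - 1"
  have small: "D \<le> 10 * (1/2)^j" if "j \<le> L" for j
  proof -
    have "j < n0" using that \<open>n0 \<noteq> 0\<close> unfolding L_def by simp
    then have "\<not> P j" unfolding n0_def by (rule not_less_Least)
    then show ?thesis unfolding P_def by simp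
  qed
  have big: "10 * (1/2::real)^j < D" if "L < j" for j
  proof -
    have "n0 \<le> j" using that \<open>n0 \<noteq> 0\<close> unfolding L_def by simp
    then have "(1/2::real)^j \<le> (1/2)^n0" by (intro power_decreasing) auto
    then show ?thesis using \<open>P n0\<close> unfolding P_def by linarith
  qed
  define a where "a = (\<lambda>j. if j \<le> L then (4::real)^j else 0)"
  let ?T = "\<lambda>j m. ennreal (1 / ((1/2::real) ^ j) ^ 2) * indicator (carleson_box \<beta> j m) \<zeta> * indicator (carleson_box \<beta> j m) z"
  have A: "(\<Sum>m<2^j. ?T j m) \<le> ennreal (a j)" for j
  proof (cases "\<exists>m<2^j. z \<in> carleson_box \<beta> j m \<and> \<zeta> \<in> carleson_box \<beta> j m")
    case True
    then obtain m0 where m0: "m0 < 2^j" "z \<in> carleson_box \<beta> j m0" "\<zeta> \<in> carleson_box \<beta> j m0" by blast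
    have "D \<le> 10 * (1/2)^j" using box_kernel_le[OF m0(2,3)] unfolding D_def .
    then have "j \<le> L" using big by (meson not_le)
    have "(\<Sum>m<2^j. ?T j m) = ?T j m0 + (\<Sum>m\<in>{..<2^j} - {m0}. ?T j m)"
      using m0(1) by (subst sum.remove[of _ m0]) auto
    also have "(\<Sum>m\<in>{..<2^j} - {m0}. ?T j m) = 0"
    proof (rule sum.neutral)
      show "\<forall>m\<in>{..<2^j} - {m0}. ?T j m = 0"
      proof
        fix m assume "m \<in> {..<2^j} - {m0}"
        then have "m < 2^j" "m \<noteq> m0" by auto
        then have "z \<notin> carleson_box \<beta> j m" using box_disjoint[OF _ m0(2) _ m0(1)] by blast
        then show "?T j m = 0" by simp
      qed
    qed
    also have "?T j m0 = ennreal (4^j)" using m0 by (simp add: cj_eq)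
    finally show ?thesis using \<open>j \<le> L\<close> unfolding a_def by simp
  next
    case False
    then have "?T j m = 0" if "m < 2^j" for m using that by (auto simp: indicator_def)
    then have "(\<Sum>m<2^j. ?T j m) = 0" by (intro sum.neutral) blast
    then show ?thesis by simp
  qed
  have "Kb \<beta> z \<zeta> \<le> (\<Sum>j. ennreal (a j))"
    unfolding Kb_def by (rule suminf_le[OF A]) auto
  also have "\<dots> = (\<Sum>j<Suc L. ennreal (a j))"
    by (rule suminf_finite) (auto simp: a_def)
  also have "\<dots> = ennreal (\<Sum>j<Suc L. a j)" by (rule sum_ennreal) (simp add: a_def)
  also have "(\<Sum>j<Suc L. a j) = (\<Sum>j<Suc L. (4::real)^j)" unfolding a_def by (intro sum.cong) auto
  also have "\<dots> = (4^(Suc L) - 1) / 3" by (subst geometric_sum) auto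
  also have "\<dots> \<le> 4/3 * 4^L" by simp
  also have "4^L \<le> 100 / D^2"
  proof -
    have "D^2 \<le> (10 * (1/2)^L)^2" using small[of L] D0 by (intro power_mono) auto
    also have "\<dots> = 100 * ((1/2)^L)^2" by (simp add: power_mult_distrib)
    finally have "D^2 * 4^L \<le> 100 * (((1/2::real)^L)^2 * 4^L)" by (simp add: mult_right_mono)
    also have "((1/2::real)^L)^2 * 4^L = 1" using cj_eq[of L] by (simp add: field_simps)
    finally show ?thesis using D0 by (simp add: field_simps)
  qed
  finally have "Kb \<beta> z \<zeta> \<le> ennreal (4/3 * (100 / D^2))" by (simp add: ennreal_leI)
  then have "ennreal (1/150) * Kb \<beta> z \<zeta> \<le> ennreal (1/150) * ennreal (4/3 * (100 / D^2))"
    by (rule mult_left_mono) simp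
  also have "\<dots> = ennreal (1/150 * (4/3 * (100 / D^2)))" by (rule ennreal_mult[symmetric]) auto
  also have "\<dots> \<le> ennreal (1 / D^2)" using D0 by (intro ennreal_leI) (simp add: field_simps)
  finally show ?thesis unfolding D_def .
qed



theorem proposition2p3:
  shows "\<exists>C Ct :: real. C > 0 \<and> Ct > 0 \<and>
    (\<forall>\<beta>0 \<in> {0, 1/3}. \<forall>f. nonneg_L1loc f \<longrightarrow> (\<forall>z \<in> unit_disc.
       ennreal Ct * dyadic_op \<beta>0 f z \<le> bergman_max f z \<and>
       bergman_max f z \<le> ennreal C * (\<Sum>\<beta>\<in>{0, 1/3}. dyadic_op \<beta> f z)))"
proof (rule exI[of _ 36], rule exI[of _ "1/150"], intro conjI ballI allI impI)
  fix \<beta>0 :: real and f and z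
  assume f: "nonneg_L1loc f" and z: "z \<in> unit_disc"
  define G where "G = (\<lambda>\<zeta>. ennreal (f \<zeta>) * indicator unit_disc \<zeta>)"
  have Gm[measurable]: "G \<in> borel_measurable lborel" unfolding G_def by (rule G_meas[OF f])
  have f0: "\<And>z. z \<in> unit_disc \<Longrightarrow> 0 \<le> f z" using f unfolding nonneg_L1loc_def by auto
  define W where "W = (\<lambda>\<zeta>. ennreal (1 / (cmod (1 - cnj \<zeta> * z))^2))"
  have rep: "dyadic_op \<beta> f z = ennreal (1/pi) * (\<integral>\<^sup>+\<zeta>. G \<zeta> * Kb \<beta> z \<zeta> \<partial>lborel)" for \<beta>
    unfolding G_def by (rule dyadic_repr[OF G_meas[OF f]])
  have pw: "ennreal (f \<zeta> / (cmod (1 - cnj \<zeta> * z))\<^sup>2) * indicator unit_disc \<zeta> = G \<zeta> * W \<zeta>" for \<zeta>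
  proof (cases "\<zeta> \<in> unit_disc")
    case True
    have "ennreal (f \<zeta> / (cmod (1 - cnj \<zeta> * z))\<^sup>2) = ennreal (f \<zeta> * (1 / (cmod (1 - cnj \<zeta> * z))\<^sup>2))"
      by simp
    also have "\<dots> = ennreal (f \<zeta>) * W \<zeta>" unfolding W_def by (rule ennreal_mult) (auto simp: f0[OF True])
    finally show ?thesis using True unfolding G_def by (simp add: ac_simps)
  qed (simp add: G_def)
  have berg: "bergman_max f z = ennreal (1/pi) * (\<integral>\<^sup>+\<zeta>. G \<zeta> * W \<zeta> \<partial>lborel)"
    unfolding bergman_max_def dA_integral_def pw ..
  show "ennreal (1/150) * dyadic_op \<beta>0 f z \<le> bergman_max f z"
  proof -
    have "ennreal (1/150) * dyadic_op \<beta>0 f z = ennreal (1/pi) * (ennreal (1/150) * (\<integral>\<^sup>+\<zeta>. G \<zeta> * Kb \<beta>0 z \<zeta> \<partial>lborel))"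
      unfolding rep by (simp add: ac_simps)
    also have "ennreal (1/150) * (\<integral>\<^sup>+\<zeta>. G \<zeta> * Kb \<beta>0 z \<zeta> \<partial>lborel) = (\<integral>\<^sup>+\<zeta>. ennreal (1/150) * (G \<zeta> * Kb \<beta>0 z \<zeta>) \<partial>lborel)"
      by (rule nn_integral_cmult[symmetric]) measurable
    also have "\<dots> \<le> (\<integral>\<^sup>+\<zeta>. G \<zeta> * W \<zeta> \<partial>lborel)"
    proof (rule nn_integral_mono)
      fix \<zeta>
      show "ennreal (1/150) * (G \<zeta> * Kb \<beta>0 z \<zeta>) \<le> G \<zeta> * W \<zeta>"
      proof (cases "\<zeta> \<in> unit_disc")
        case True
        have "ennreal (1/150) * (G \<zeta> * Kb \<beta>0 z \<zeta>) = G \<zeta> * (ennreal (1/150) * Kb \<beta>0 z \<zeta>)" by (simp add: ac_simps)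
        also have "\<dots> \<le> G \<zeta> * W \<zeta>" unfolding W_def using KL[OF z True] by (rule mult_left_mono) simp
        finally show ?thesis .
      qed (simp add: G_def)
    qed
    finally show ?thesis unfolding berg by (simp add: mult_left_mono)
  qed
  show "bergman_max f z \<le> ennreal 36 * (\<Sum>\<beta>\<in>{0, 1/3}. dyadic_op \<beta> f z)"
  proof -
    have "(\<integral>\<^sup>+\<zeta>. G \<zeta> * W \<zeta> \<partial>lborel) \<le> (\<integral>\<^sup>+\<zeta>. ennreal 36 * (G \<zeta> * Kb 0 z \<zeta>) + ennreal 36 * (G \<zeta> * Kb (1/3) z \<zeta>) \<partial>lborel)"
    proof (rule nn_integral_mono)
      fix \<zeta>
      show "G \<zeta> * W \<zeta> \<le> ennreal 36 * (G \<zeta> * Kb 0 z \<zeta>) + ennreal 36 * (G \<zeta> * Kb (1/3) z \<zeta>)"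
      proof (cases "\<zeta> \<in> unit_disc")
        case True
        have "G \<zeta> * W \<zeta> \<le> G \<zeta> * (ennreal 36 * (Kb 0 z \<zeta> + Kb (1/3) z \<zeta>))"
          unfolding W_def using KU[OF z True] by (rule mult_left_mono) simp
        also have "\<dots> = ennreal 36 * (G \<zeta> * Kb 0 z \<zeta>) + ennreal 36 * (G \<zeta> * Kb (1/3) z \<zeta>)"
          by (simp add: algebra_simps)
        finally show ?thesis .
      qed (simp add: G_def)
    qed
    also have "\<dots> = ennreal 36 * (\<integral>\<^sup>+\<zeta>. G \<zeta> * Kb 0 z \<zeta> \<partial>lborel) + ennreal 36 * (\<integral>\<^sup>+\<zeta>. G \<zeta> * Kb (1/3) z \<zeta> \<partial>lborel)"
      by (subst nn_integral_add) (auto simp: nn_integral_cmult)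
    finally have "ennreal (1/pi) * (\<integral>\<^sup>+\<zeta>. G \<zeta> * W \<zeta> \<partial>lborel) \<le> ennreal (1/pi) * (ennreal 36 * (\<integral>\<^sup>+\<zeta>. G \<zeta> * Kb 0 z \<zeta> \<partial>lborel) + ennreal 36 * (\<integral>\<^sup>+\<zeta>. G \<zeta> * Kb (1/3) z \<zeta> \<partial>lborel))"
      by (rule mult_left_mono) simp
    also have "\<dots> = ennreal 36 * (dyadic_op 0 f z + dyadic_op (1/3) f z)"
      unfolding rep by (simp add: algebra_simps)
    finally show ?thesis unfolding berg by simp
  qed
qed (auto)

end
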